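(* Let $I=\langle Q,D,\tau_{in},\tau_{out}\rangle$ be an instance of DTP where $Q$ is nonrecursive, connected, and contains no rigid atoms. Let $a$ be the maximum radius of a rule of $\Pi_Q$, and let $\mathbf T$ be the set consisting of $\tau_{out}$ and all time points occurring in $\Pi_Q$. Let $U$ be a $\tau_{in}$-update involving only objects in $C_I$, let $P$ be a predicate of $\Pi_Q$, $\vec o$ a tuple of objects and $\tau$ a time point such that $\Pi_Q\cup D\cup U\models P(\vec o,\tau)$ and $|\tau-\tau'|\le a\cdot(\mathrm{rank}(\Pi_Q)-\mathrm{rank}(P))$ for some $\tau'\in\mathbf T$. Then $\Pi_Q\cup D\cup B_I\models P(\vec o,\tau)$, where $B_I$ is the bounded critical update of $I$.
   Context: Temporal Datalog. Constants are partitioned into objects and integer time points; variables into object variables and time variables. A time term is a time point, a time variable, or an expression $t+k$ with $t$ a time variable and $k\in\mathbb{Z}$. Each predicate is either extensional (EDB) or intensional (IDB) and has an arity $n\ge0$, each position being of object sort or time sort; a predicate is rigid if all its positions are of object sort, and temporal if its last position is of time sort and all others are of object sort. An atom $P(t_1,\dots,t_n)$ has terms of the required sorts. A rule is $\bigwedge_i\alpha_i\to\alpha$ with $\alpha$ and all $\alpha_i$ rigid or temporal atoms, $\alpha$ IDB whenever the body is nonempty, and every head variable occurring in the body. A program is a finite set of rules. A fact is a ground rigid or temporal atom without $+$ (identified with the rule $\top\to\alpha$); a dataset is a finite set of EDB facts. Rules are read as universally quantified first-order sentences with $+$ interpreted as integer addition; $\Pi\models\alpha$ denotes entailment. A query is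 $Q=\langle P_Q,\Pi_Q\rangle$ with $\Pi_Q$ a program and $P_Q$ an IDB predicate of $\Pi_Q$; it is temporal if $P_Q$ is temporal. For a temporal query $Q$, dataset $D$ and time point $\tau$, $Q(D,\tau)$ is the set of tuples of objects $\vec o$ with $\Pi_Q\cup D\models P_Q(\vec o,\tau)$. A $\tau_{in}$-history is a dataset consisting of rigid facts and temporal facts with time argument $\le\tau_{in}$; a $\tau_{in}$-update is a dataset consisting of temporal facts with time argument $>\tau_{in}$. Definitive Time Point (DTP): an instance is $\langle Q,D,\tau_{in},\tau_{out}\rangle$ with $Q$ a temporal query, $D$ a $\tau_{in}$-history and $\tau_{out}\le\tau_{in}$; DTP holds for it iff $Q(D,\tau_{out})=Q(D\cup U,\tau_{out})$ for every $\tau_{in}$-update $U$. Critical domain: $C_I$ is the set of all objects occurring in $\Pi_Q\cup D$ together with one fresh object $o_I$. Predicate $P$ depends on $P'$ in $\Pi$ if some rule of $\Pi$ has $P$ in the head and $P'$ in the body; $\Pi$ (or a query with program $\Pi$) is nonrecursive if the graph of this dependency relation is acyclic. $\mathrm{rank}(P)=\mathrm{rank}(P,\Pi)$ is $0$ if $P$ does not occur in a rule head of $\Pi$, and otherwise the maximum of $\mathrm{rank}(P')+1$ over predicates $P'$ on which $P$ depends; $\mathrm{rank}(\Pi)$ is the maximum rank of a predicate of $\Pi$. A rule is connected if it contains at most one time variable and, if a time variable occurs in the body, it also occurs in the head; a query is connected if all its rules are. For a time term $s$, $\Delta(s)=k$ if $s=t+k$ with $t$ a variable, and $\Delta(s)=0$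 otherwise. The radius of a connected rule $r$ mentioning a time variable is the maximum of $|\Delta(s)-\Delta(s')|$ where $s$ is the time argument of the head and $s'$ the time argument of a body atom of $r$. The radius $\mathrm{rad}(\Pi)$ of a connected program is the number of rules of $\Pi$ times the maximum radius of a rule of $\Pi$; $\mathrm{rad}(Q)=\mathrm{rad}(\Pi_Q)$. Bounded critical update: let $\tau_0$ be the maximum of $\tau_{out}$ and the largest time point occurring in $\Pi_Q$; a time point $\tau$ is critical for $I$ if $\tau_{in}<\tau\le\tau_0+\mathrm{rad}(\Pi_Q)$; $B_I$ consists of all facts $P(\vec o,\tau)$ with $P$ a temporal EDB predicate of $\Pi_Q$, $\vec o$ a tuple over $C_I$ and $\tau$ critical. *)

theory Defs
  imports Main
begin

datatype 'o oterm = OVar nat | OConst 'o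

datatype tterm = TConst int | TVar nat | TShift nat int

text \<open>Rigid atoms have time argument None, temporal atoms Some s.\<close>
datatype ('p,'o) atom = Atom 'p "'o oterm list" "tterm option"

type_synonym ('p,'o) rule = "('p,'o) atom list \<times> ('p,'o) atom"

type_synonym ('p,'o) fact = "'p \<times> 'o list \<times> int option"

text \<open>Signature: sig P = (number of object positions, is temporal).\<close>
type_synonym 'p signature = "'p \<Rightarrow> nat \<times> bool"

fun apred :: "('p,'o) atom \<Rightarrow> 'p" where "apred (Atom P ts t) = P"
fun atargs :: "('p,'o) atom \<Rightarrow> tterm option" where "atargs (Atom P ts t) = t"

fun tt_vars :: "tterm \<Rightarrow> nat set" where
  "tt_vars (TConst k) = {}" | "tt_vars (TVar x) = {x}" | "tt_vars (TShift x k) = {x}"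
fun tt_consts :: "tterm \<Rightarrow> int set" where
  "tt_consts (TConst k) = {k}" | "tt_consts (TVar x) = {}" | "tt_consts (TShift x k) = {}"
fun ot_vars :: "'o oterm \<Rightarrow> nat set" where
  "ot_vars (OVar x) = {x}" | "ot_vars (OConst c) = {}"
fun ot_consts :: "'o oterm \<Rightarrow> 'o set" where
  "ot_consts (OVar x) = {}" | "ot_consts (OConst c) = {c}"

fun atom_ovars :: "('p,'o) atom \<Rightarrow> nat set" where
  "atom_ovars (Atom P ts t) = (\<Union>s\<in>set ts. ot_vars s)"
fun atom_tvars :: "('p,'o) atom \<Rightarrow> nat set" where
  "atom_tvars (Atom P ts t) = (case t of None \<Rightarrow> {} | Some s \<Rightarrow> tt_vars s)"
fun atom_objs :: "('p,'o) atom \<Rightarrow> 'o set" where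
  "atom_objs (Atom P ts t) = (\<Union>s\<in>set ts. ot_consts s)"
fun atom_tpoints :: "('p,'o) atom \<Rightarrow> int set" where
  "atom_tpoints (Atom P ts t) = (case t of None \<Rightarrow> {} | Some s \<Rightarrow> tt_consts s)"

definition rule_atoms :: "('p,'o) rule \<Rightarrow> ('p,'o) atom set" where
  "rule_atoms r = insert (snd r) (set (fst r))"

definition body_tvars :: "('p,'o) rule \<Rightarrow> nat set" where
  "body_tvars r = (\<Union>b\<in>set (fst r). atom_tvars b)"
definition body_ovars :: "('p,'o) rule \<Rightarrow> nat set" where
  "body_ovars r = (\<Union>b\<in>set (fst r). atom_ovars b)"
definition rule_tvars :: "('p,'o) rule \<Rightarrow> nat set" where
  "rule_tvars r = (\<Union>a\<in>rule_atoms r. atom_tvars a)"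

definition prog_atoms :: "('p,'o) rule set \<Rightarrow> ('p,'o) atom set" where
  "prog_atoms \<Pi> = (\<Union>r\<in>\<Pi>. rule_atoms r)"
definition preds :: "('p,'o) rule set \<Rightarrow> 'p set" where
  "preds \<Pi> = apred ` prog_atoms \<Pi>"
definition prog_objs :: "('p,'o) rule set \<Rightarrow> 'o set" where
  "prog_objs \<Pi> = (\<Union>a\<in>prog_atoms \<Pi>. atom_objs a)"
definition prog_tpoints :: "('p,'o) rule set \<Rightarrow> int set" where
  "prog_tpoints \<Pi> = (\<Union>a\<in>prog_atoms \<Pi>. atom_tpoints a)"
definition data_objs :: "('p,'o) fact set \<Rightarrow> 'o set" where
  "data_objs D = (\<Union>f\<in>D. set (fst (snd f)))"

fun wf_atom :: "'p signature \<Rightarrow> ('p,'o) atom \<Rightarrow> bool" where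
  "wf_atom sig (Atom P ts t) \<longleftrightarrow> length ts = fst (sig P) \<and> (t \<noteq> None \<longleftrightarrow> snd (sig P))"

definition wf_rule :: "'p signature \<Rightarrow> ('p \<Rightarrow> bool) \<Rightarrow> ('p,'o) rule \<Rightarrow> bool" where
  "wf_rule sig edb r \<longleftrightarrow> (\<forall>a\<in>rule_atoms r. wf_atom sig a)
     \<and> (fst r \<noteq> [] \<longrightarrow> \<not> edb (apred (snd r)))
     \<and> atom_ovars (snd r) \<subseteq> body_ovars r
     \<and> atom_tvars (snd r) \<subseteq> body_tvars r"

definition program :: "'p signature \<Rightarrow> ('p \<Rightarrow> bool) \<Rightarrow> ('p,'o) rule set \<Rightarrow> bool" where
  "program sig edb \<Pi> \<longleftrightarrow> finite \<Pi> \<and> (\<forall>r\<in>\<Pi>. wf_rule sig edb r)"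

definition wf_fact :: "'p signature \<Rightarrow> ('p,'o) fact \<Rightarrow> bool" where
  "wf_fact sig f \<longleftrightarrow> (case f of (P, os, t) \<Rightarrow>
      length os = fst (sig P) \<and> (t \<noteq> None \<longleftrightarrow> snd (sig P)))"

definition dataset :: "'p signature \<Rightarrow> ('p \<Rightarrow> bool) \<Rightarrow> ('p,'o) fact set \<Rightarrow> bool" where
  "dataset sig edb D \<longleftrightarrow> finite D \<and> (\<forall>f\<in>D. wf_fact sig f \<and> edb (fst f))"

definition history :: "'p signature \<Rightarrow> ('p \<Rightarrow> bool) \<Rightarrow> int \<Rightarrow> ('p,'o) fact set \<Rightarrow> bool" where
  "history sig edb \<tau>in D \<longleftrightarrow> dataset sig edb D \<and>
     (\<forall>(P, os, t)\<in>D. \<forall>\<tau>. t = Some \<tau> \<longrightarrow> \<tau> \<le> \<tau>in)"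

definition update :: "'p signature \<Rightarrow> ('p \<Rightarrow> bool) \<Rightarrow> int \<Rightarrow> ('p,'o) fact set \<Rightarrow> bool" where
  "update sig edb \<tau>in U \<longleftrightarrow> dataset sig edb U \<and>
     (\<forall>(P, os, t)\<in>U. \<exists>\<tau>. t = Some \<tau> \<and> \<tau>in < \<tau>)"

definition temporal_query :: "'p signature \<Rightarrow> ('p \<Rightarrow> bool) \<Rightarrow> 'p \<Rightarrow> ('p,'o) rule set \<Rightarrow> bool" where
  "temporal_query sig edb PQ \<Pi> \<longleftrightarrow> program sig edb \<Pi> \<and> PQ \<in> preds \<Pi> \<and> \<not> edb PQ \<and> snd (sig PQ)"

definition DTP_instance :: "'p signature \<Rightarrow> ('p \<Rightarrow> bool) \<Rightarrow> 'p \<Rightarrow> ('p,'o) rule set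
    \<Rightarrow> ('p,'o) fact set \<Rightarrow> int \<Rightarrow> int \<Rightarrow> bool" where
  "DTP_instance sig edb PQ \<Pi> D \<tau>in \<tau>out \<longleftrightarrow>
     temporal_query sig edb PQ \<Pi> \<and> history sig edb \<tau>in D \<and> \<tau>out \<le> \<tau>in"

fun eval_o :: "(nat \<Rightarrow> 'o) \<Rightarrow> 'o oterm \<Rightarrow> 'o" where
  "eval_o ov (OVar x) = ov x" | "eval_o ov (OConst c) = c"
fun eval_t :: "(nat \<Rightarrow> int) \<Rightarrow> tterm \<Rightarrow> int" where
  "eval_t tv (TConst k) = k" | "eval_t tv (TVar x) = tv x" | "eval_t tv (TShift x k) = tv x + k"
fun eval_atom :: "(nat \<Rightarrow> 'o) \<Rightarrow> (nat \<Rightarrow> int) \<Rightarrow> ('p,'o) atom \<Rightarrow> ('p,'o) fact" where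
  "eval_atom ov tv (Atom P ts t) = (P, map (eval_o ov) ts, map_option (eval_t tv) t)"

text \<open>An (Herbrand) interpretation is a set of ground facts; it satisfies a program if it is
  closed under all ground instances of its rules (integer time domain, + as addition).\<close>
definition satisfies :: "('p,'o) fact set \<Rightarrow> ('p,'o) rule set \<Rightarrow> bool" where
  "satisfies I \<Pi> \<longleftrightarrow> (\<forall>r\<in>\<Pi>. \<forall>ov tv.
      (\<forall>b\<in>set (fst r). eval_atom ov tv b \<in> I) \<longrightarrow> eval_atom ov tv (snd r) \<in> I)"

definition entails :: "('p,'o) rule set \<Rightarrow> ('p,'o) fact set \<Rightarrow> ('p,'o) fact \<Rightarrow> bool" where
  "entails \<Pi> D f \<longleftrightarrow> (\<forall>I. satisfies I \<Pi> \<and> D \<subseteq> I \<longrightarrow> f \<in> I)"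

definition depends :: "('p,'o) rule set \<Rightarrow> 'p \<Rightarrow> 'p \<Rightarrow> bool" where
  "depends \<Pi> P P' \<longleftrightarrow> (\<exists>r\<in>\<Pi>. apred (snd r) = P \<and> P' \<in> apred ` set (fst r))"

definition nonrecursive :: "('p,'o) rule set \<Rightarrow> bool" where
  "nonrecursive \<Pi> \<longleftrightarrow> acyclic {(P, P'). depends \<Pi> P P'}"

definition is_rank :: "('p,'o) rule set \<Rightarrow> ('p \<Rightarrow> nat) \<Rightarrow> bool" where
  "is_rank \<Pi> f \<longleftrightarrow> (\<forall>P. f P = Max (insert 0 {f P' + 1 | P'. depends \<Pi> P P'}))"

definition rank :: "('p,'o) rule set \<Rightarrow> 'p \<Rightarrow> nat" where
  "rank \<Pi> = (THE f. is_rank \<Pi> f)"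

definition prog_rank :: "('p,'o) rule set \<Rightarrow> nat" where
  "prog_rank \<Pi> = Max (insert 0 (rank \<Pi> ` preds \<Pi>))"

definition connected_rule :: "('p,'o) rule \<Rightarrow> bool" where
  "connected_rule r \<longleftrightarrow> card (rule_tvars r) \<le> 1 \<and> body_tvars r \<subseteq> atom_tvars (snd r)"

definition connected :: "('p,'o) rule set \<Rightarrow> bool" where
  "connected \<Pi> \<longleftrightarrow> (\<forall>r\<in>\<Pi>. connected_rule r)"

definition no_rigid_atoms :: "('p,'o) rule set \<Rightarrow> bool" where
  "no_rigid_atoms \<Pi> \<longleftrightarrow> (\<forall>a\<in>prog_atoms \<Pi>. atargs a \<noteq> None)"

fun delta :: "tterm \<Rightarrow> int" where
  "delta (TShift x k) = k" | "delta (TConst k) = 0" | "delta (TVar x) = 0"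

definition radius :: "('p,'o) rule \<Rightarrow> int" where
  "radius r = Max (insert 0 {\<bar>delta s - delta s'\<bar> | s s' b.
      atargs (snd r) = Some s \<and> b \<in> set (fst r) \<and> atargs b = Some s'})"

definition max_radius :: "('p,'o) rule set \<Rightarrow> int" where
  "max_radius \<Pi> = Max (insert 0 (radius ` {r\<in>\<Pi>. rule_tvars r \<noteq> {}}))"

definition rad :: "('p,'o) rule set \<Rightarrow> int" where
  "rad \<Pi> = int (card \<Pi>) * max_radius \<Pi>"

definition crit_domain :: "('p,'o) rule set \<Rightarrow> ('p,'o) fact set \<Rightarrow> 'o \<Rightarrow> 'o set" where
  "crit_domain \<Pi> D oI = insert oI (prog_objs \<Pi> \<union> data_objs D)"

definition tau0 :: "('p,'o) rule set \<Rightarrow> int \<Rightarrow> int" where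
  "tau0 \<Pi> \<tau>out = Max (insert \<tau>out (prog_tpoints \<Pi>))"

definition critical :: "('p,'o) rule set \<Rightarrow> int \<Rightarrow> int \<Rightarrow> int \<Rightarrow> bool" where
  "critical \<Pi> \<tau>in \<tau>out \<tau> \<longleftrightarrow> \<tau>in < \<tau> \<and> \<tau> \<le> tau0 \<Pi> \<tau>out + rad \<Pi>"

definition bounded_update :: "'p signature \<Rightarrow> ('p \<Rightarrow> bool) \<Rightarrow> ('p,'o) rule set
    \<Rightarrow> ('p,'o) fact set \<Rightarrow> int \<Rightarrow> int \<Rightarrow> 'o \<Rightarrow> ('p,'o) fact set" where
  "bounded_update sig edb \<Pi> D \<tau>in \<tau>out oI =
     {(P, os, Some \<tau>) | P os \<tau>. P \<in> preds \<Pi> \<and> edb P \<and> snd (sig P) \<and>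
        length os = fst (sig P) \<and> set os \<subseteq> crit_domain \<Pi> D oI \<and> critical \<Pi> \<tau>in \<tau>out \<tau>}"

end

theory Submission
  imports Defs
begin

lemma finite_rule_atoms: "finite (rule_atoms r)"
  by (simp add: rule_atoms_def)

lemma finite_prog_atoms: "finite \<Pi> \<Longrightarrow> finite (prog_atoms \<Pi>)"
  by (simp add: prog_atoms_def finite_rule_atoms)

lemma finite_preds: "finite \<Pi> \<Longrightarrow> finite (preds \<Pi>)"
  by (simp add: preds_def finite_prog_atoms)

lemma finite_tt_consts: "finite (tt_consts s)"
  by (cases s) auto

lemma finite_atom_tpoints: "finite (atom_tpoints a)"
  by (cases a) (auto split: option.splits simp: finite_tt_consts)

lemma finite_prog_tpoints: "finite \<Pi> \<Longrightarrow> finite (prog_tpoints \<Pi>)"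
  by (simp add: prog_tpoints_def finite_prog_atoms finite_atom_tpoints)

lemma depends_preds:
  assumes "depends \<Pi> P P'" shows "P \<in> preds \<Pi>" "P' \<in> preds \<Pi>"
  using assms unfolding depends_def preds_def prog_atoms_def rule_atoms_def
  by force+

lemma finite_dep: "finite \<Pi> \<Longrightarrow> finite {(P, P'). depends \<Pi> P P'}"
proof -
  assume "finite \<Pi>"
  have "{(P, P'). depends \<Pi> P P'} \<subseteq> preds \<Pi> \<times> preds \<Pi>"
    using depends_preds by auto
  thus ?thesis using finite_preds[OF \<open>finite \<Pi>\<close>] by (meson finite_SigmaI finite_subset)
qed

lemma rank_is_rank:
  assumes fin: "finite \<Pi>" and nr: "nonrecursive \<Pi>"
  shows "is_rank \<Pi> (rank \<Pi>)"
proof -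
  let ?R = "{(P, P'). depends \<Pi> P P'}"
  have wf: "wf (?R\<inverse>)"
    using finite_acyclic_wf_converse finite_dep[OF fin] nr unfolding nonrecursive_def by blast
  define F where "F = (\<lambda>(f::'a \<Rightarrow> nat) P. Max (insert 0 {f P' + 1 | P'. depends \<Pi> P P'}))"
  have adm: "adm_wf (?R\<inverse>) F"
    unfolding adm_wf_def F_def
  proof (intro allI impI)
    fix f g :: "'a \<Rightarrow> nat" and x
    assume "\<forall>z. (z, x) \<in> ?R\<inverse> \<longrightarrow> f z = g z"
    hence h: "\<And>z. depends \<Pi> x z \<Longrightarrow> f z = g z" by auto
    have "{f P' + 1 | P'. depends \<Pi> x P'} = {g P' + 1 | P'. depends \<Pi> x P'}"
      unfolding setcompr_eq_image by (rule image_cong) (simp_all add: h)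
    thus "Max (insert 0 {f P' + 1 | P'. depends \<Pi> x P'}) = Max (insert 0 {g P' + 1 | P'. depends \<Pi> x P'})"
      by simp
  qed
  define f where "f = wfrec (?R\<inverse>) F"
  have ff: "f = F f" unfolding f_def using wfrec_fixpoint[OF wf adm] .
  have isr: "is_rank \<Pi> f" unfolding is_rank_def
  proof
    fix P
    have "F f P = Max (insert 0 {f P' + 1 | P'. depends \<Pi> P P'})" unfolding F_def by (rule refl)
    then show "f P = Max (insert 0 {f P' + 1 | P'. depends \<Pi> P P'})"
      by (rule trans[OF fun_cong[OF ff]])
  qed
  have uniq: "g = f" if "is_rank \<Pi> g" for g
  proof
    fix P
    show "g P = f P"
      using wf
    proof (induction P rule: wf_induct_rule)
      case (less x)
      hence h: "\<And>z. depends \<Pi> x z \<Longrightarrow> g z = f z" by auto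
      have eq: "{g P' + 1 | P'. depends \<Pi> x P'} = {f P' + 1 | P'. depends \<Pi> x P'}"
        unfolding setcompr_eq_image by (rule image_cong) (simp_all add: h)
      have "g x = Max (insert 0 {g P' + 1 | P'. depends \<Pi> x P'})"
        using that unfolding is_rank_def by (rule spec)
      also have "\<dots> = Max (insert 0 {f P' + 1 | P'. depends \<Pi> x P'})" by (simp only: eq)
      also have "\<dots> = f x" using isr[unfolded is_rank_def, THEN spec, of x] by (rule sym)
      finally show ?case .
    qed
  qed
  have "\<exists>!f. is_rank \<Pi> f" using isr uniq by blast
  thus ?thesis unfolding rank_def by (rule theI')
qed

lemma rank_dep:
  assumes fin: "finite \<Pi>" and nr: "nonrecursive \<Pi>" and d: "depends \<Pi> P P'"
  shows "rank \<Pi> P' + 1 \<le> rank \<Pi> P"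
proof -
  let ?S = "{rank \<Pi> P' + 1 | P'. depends \<Pi> P P'}"
  have "?S \<subseteq> (\<lambda>Q. rank \<Pi> Q + 1) ` preds \<Pi>" by (auto dest: depends_preds)
  hence fS: "finite (insert 0 ?S)" using finite_preds[OF fin] by (meson finite_imageI finite_insert finite_subset)
  have "rank \<Pi> P = Max (insert 0 ?S)"
    using rank_is_rank[OF fin nr] unfolding is_rank_def by (rule spec)
  moreover have "rank \<Pi> P' + 1 \<in> insert 0 ?S" using d by blast
  ultimately show ?thesis using Max_ge[OF fS] by simp
qed

lemma rank_le_card:
  assumes fin: "finite \<Pi>" and nr: "nonrecursive \<Pi>"
  shows "rank \<Pi> P \<le> card \<Pi>"
proof -
  let ?R = "{(P, P'). depends \<Pi> P P'}"
  have wf: "wf (?R\<inverse>)"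
    using finite_acyclic_wf_converse finite_dep[OF fin] nr unfolding nonrecursive_def by blast
  have acy: "acyclic ?R" using nr unfolding nonrecursive_def .
  define A where "A = (\<lambda>Q. {r\<in>\<Pi>. (Q, apred (snd r)) \<in> ?R\<^sup>*})"
  have "rank \<Pi> P \<le> card (A P)"
    using wf
  proof (induction P rule: wf_induct_rule)
    case (less x)
    let ?S = "{rank \<Pi> P' + 1 | P'. depends \<Pi> x P'}"
    have "?S \<subseteq> (\<lambda>Q. rank \<Pi> Q + 1) ` preds \<Pi>" by (auto dest: depends_preds)
    hence fS: "finite (insert 0 ?S)" using finite_preds[OF fin] by (meson finite_imageI finite_insert finite_subset)
    have rx: "rank \<Pi> x = Max (insert 0 ?S)"
      using rank_is_rank[OF fin nr] unfolding is_rank_def by (rule spec)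
    have "rank \<Pi> x \<in> insert 0 ?S" unfolding rx by (rule Max_in[OF fS]) simp
    then show ?case
    proof
      assume "rank \<Pi> x = 0" thus ?thesis by simp
    next
      assume "rank \<Pi> x \<in> ?S"
      then obtain P' where rP: "rank \<Pi> x = rank \<Pi> P' + 1" and d: "depends \<Pi> x P'" by blast
      from d obtain r0 where r0: "r0 \<in> \<Pi>" "apred (snd r0) = x" "P' \<in> apred ` set (fst r0)"
        unfolding depends_def by blast
      have IH: "rank \<Pi> P' \<le> card (A P')" using less d by blast
      have sub: "A P' \<subseteq> A x" unfolding A_def using d
        by (auto intro: converse_rtrancl_into_rtrancl)
      have "r0 \<in> A x" unfolding A_def using r0 by auto
      moreover have "r0 \<notin> A P'"
      proof
        assume "r0 \<in> A P'"
        hence "(P', x) \<in> ?R\<^sup>*" unfolding A_def using r0 by auto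
        moreover have "(x, P') \<in> ?R" using d by simp
        ultimately have "(x, x) \<in> ?R\<^sup>+" by (meson rtrancl_into_trancl2)
        thus False using acy unfolding acyclic_def by blast
      qed
      ultimately have "A P' \<subset> A x" using sub by blast
      moreover have "finite (A x)" unfolding A_def using fin by simp
      ultimately have "card (A P') < card (A x)" by (rule psubset_card_mono[rotated])
      thus ?thesis using rP IH by simp
    qed
  qed
  also have "card (A P) \<le> card \<Pi>" unfolding A_def using fin by (intro card_mono) auto
  finally show ?thesis .
qed

lemma finite_radius_set:
  "finite {\<bar>delta s - delta s'\<bar> | s s' b.
      atargs (snd r) = Some s \<and> b \<in> set (fst r) \<and> atargs b = Some s'}"
proof -
  have "{\<bar>delta s - delta s'\<bar> | s s' b.
      atargs (snd r) = Some s \<and> b \<in> set (fst r) \<and> atargs b = Some s'}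
    \<subseteq> (\<lambda>b. \<bar>delta (the (atargs (snd r))) - delta (the (atargs b))\<bar>) ` set (fst r)"
    by force
  thus ?thesis by (rule finite_subset) simp
qed

lemma time_step:
  assumes r: "r \<in> \<Pi>" and fin: "finite \<Pi>" and conn: "connected \<Pi>"
    and hd: "snd r = Atom Q ts (Some s)" and b: "b \<in> set (fst r)" and sb: "atargs b = Some sb"
  shows "(\<exists>k. sb = TConst k \<and> k \<in> prog_tpoints \<Pi>) \<or> \<bar>eval_t tv sb - eval_t tv s\<bar> \<le> max_radius \<Pi>"
proof -
  obtain Qb tsb where bb: "b = Atom Qb tsb (Some sb)" using sb by (cases b) auto
  have bp: "b \<in> prog_atoms \<Pi>" using r b unfolding prog_atoms_def rule_atoms_def by auto
  have tv: "\<And>x. x \<in> tt_vars sb \<Longrightarrow> x \<in> tt_vars s"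
  proof -
    fix x assume "x \<in> tt_vars sb"
    hence "x \<in> body_tvars r" unfolding body_tvars_def using b bb by force
    hence "x \<in> atom_tvars (snd r)" using conn r unfolding connected_def connected_rule_def by blast
    thus "x \<in> tt_vars s" using hd by simp
  qed
  have bound: "\<bar>eval_t tv sb - eval_t tv s\<bar> \<le> max_radius \<Pi>" if x: "x \<in> tt_vars sb" for x
  proof -
    have xs: "x \<in> tt_vars s" using tv x .
    have eq: "\<bar>eval_t tv sb - eval_t tv s\<bar> = \<bar>delta s - delta sb\<bar>"
      using x xs by (cases sb; cases s) auto
    have "\<bar>delta s - delta sb\<bar> \<le> radius r" unfolding radius_def
    proof (rule Max_ge)
      show "finite (insert 0 {\<bar>delta s - delta s'\<bar> | s s' b.
          atargs (snd r) = Some s \<and> b \<in> set (fst r) \<and> atargs b = Some s'})"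
        using finite_radius_set[of r] by simp
      show "\<bar>delta s - delta sb\<bar> \<in> insert 0 {\<bar>delta s - delta s'\<bar> | s s' b.
          atargs (snd r) = Some s \<and> b \<in> set (fst r) \<and> atargs b = Some s'}"
        using hd b sb by force
    qed
    moreover have "radius r \<le> max_radius \<Pi>" unfolding max_radius_def
    proof (rule Max_ge)
      show "finite (insert 0 (radius ` {r \<in> \<Pi>. rule_tvars r \<noteq> {}}))" using fin by simp
      have "x \<in> rule_tvars r" unfolding rule_tvars_def rule_atoms_def using hd xs by force
      thus "radius r \<in> insert 0 (radius ` {r \<in> \<Pi>. rule_tvars r \<noteq> {}})" using r by blast
    qed
    ultimately show ?thesis using eq by simp
  qed
  show ?thesis
  proof (cases sb)
    case (TConst k)
    hence "k \<in> prog_tpoints \<Pi>" using bp bb unfolding prog_tpoints_def by force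
    thus ?thesis using TConst by blast
  next
    case (TVar x) thus ?thesis using bound[of x] by simp
  next
    case (TShift x k) thus ?thesis using bound[of x] by simp
  qed
qed

inductive deriv :: "('p,'o) rule set \<Rightarrow> ('p,'o) fact set \<Rightarrow> ('p,'o) fact \<Rightarrow> bool"
  for \<Pi> S where
  base: "f \<in> S \<Longrightarrow> deriv \<Pi> S f"
| step: "r \<in> \<Pi> \<Longrightarrow> \<forall>b\<in>set (fst r). deriv \<Pi> S (eval_atom ov tv b)
          \<Longrightarrow> deriv \<Pi> S (eval_atom ov tv (snd r))"

lemma entails_deriv: "entails \<Pi> S f \<Longrightarrow> deriv \<Pi> S f"
proof -
  assume e: "entails \<Pi> S f"
  have "satisfies {f. deriv \<Pi> S f} \<Pi>" unfolding satisfies_def by (auto intro: deriv.step)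
  moreover have "S \<subseteq> {f. deriv \<Pi> S f}" by (auto intro: deriv.base)
  ultimately show ?thesis using e unfolding entails_def by blast
qed

lemma deriv_entails: "deriv \<Pi> S f \<Longrightarrow> entails \<Pi> S f"
  unfolding entails_def
proof (intro allI impI)
  fix I assume "deriv \<Pi> S f" "satisfies I \<Pi> \<and> S \<subseteq> I"
  thus "f \<in> I" by (induction rule: deriv.induct) (auto simp: satisfies_def)
qed


theorem lemma4:
  fixes sig :: "'p signature" and edb :: "'p \<Rightarrow> bool" and PQ :: 'p
    and \<Pi> :: "('p,'o) rule set" and D U :: "('p,'o) fact set"
    and \<tau>in \<tau>out \<tau> \<tau>' :: int and oI :: 'o and P :: 'p and os :: "'o list"
  assumes inst: "DTP_instance sig edb PQ \<Pi> D \<tau>in \<tau>out"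
    and nonrec: "nonrecursive \<Pi>"
    and conn: "connected \<Pi>"
    and norigid: "no_rigid_atoms \<Pi>"
    and fresh: "oI \<notin> prog_objs \<Pi> \<union> data_objs D"
    and upd: "update sig edb \<tau>in U"
    and updobjs: "data_objs U \<subseteq> crit_domain \<Pi> D oI"
    and Ppred: "P \<in> preds \<Pi>"
    and ent: "entails \<Pi> (D \<union> U) (P, os, Some \<tau>)"
    and T: "\<tau>' \<in> insert \<tau>out (prog_tpoints \<Pi>)"
    and dist: "\<bar>\<tau> - \<tau>'\<bar> \<le> max_radius \<Pi> * (int (prog_rank \<Pi>) - int (rank \<Pi> P))"
  shows "entails \<Pi> (D \<union> bounded_update sig edb \<Pi> D \<tau>in \<tau>out oI) (P, os, Some \<tau>)"
proof -
  have fin: "finite \<Pi>" using inst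
    unfolding DTP_instance_def temporal_query_def program_def by blast
  define a where "a = max_radius \<Pi>"
  define R where "R = prog_rank \<Pi>"
  define TT where "TT = insert \<tau>out (prog_tpoints \<Pi>)"
  define B where "B = bounded_update sig edb \<Pi> D \<tau>in \<tau>out oI"
  have a0: "0 \<le> a" unfolding a_def max_radius_def
    by (rule Max_ge[of _ 0, simplified]) (use fin in auto)
  have rkR: "rank \<Pi> Q \<le> R" if "Q \<in> preds \<Pi>" for Q unfolding R_def prog_rank_def
    by (rule Max_ge) (use fin finite_preds that in auto)
  have Rc: "R \<le> card \<Pi>" unfolding R_def prog_rank_def
    by (rule Max.boundedI) (use fin finite_preds rank_le_card[OF fin nonrec] in auto)
  have Tle: "x \<le> tau0 \<Pi> \<tau>out" if "x \<in> TT" for x unfolding tau0_def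
    by (rule Max_ge) (use fin finite_prog_tpoints that TT_def in auto)
  have main: "\<forall>Q os t \<tau>'. f = (Q, os, Some t) \<longrightarrow> Q \<in> preds \<Pi> \<longrightarrow> \<tau>' \<in> TT \<longrightarrow>
       \<bar>t - \<tau>'\<bar> \<le> a * (int R - int (rank \<Pi> Q)) \<longrightarrow> deriv \<Pi> (D \<union> B) f"
    if "deriv \<Pi> (D \<union> U) f" for f
    using that
  proof (induction rule: deriv.induct)
    case (base f)
    show ?case
    proof (intro allI impI)
      fix Q os t \<tau>'
      assume f: "f = (Q, os, Some t)" and Q: "Q \<in> preds \<Pi>" and tT: "\<tau>' \<in> TT"
        and d: "\<bar>t - \<tau>'\<bar> \<le> a * (int R - int (rank \<Pi> Q))"
      show "deriv \<Pi> (D \<union> B) f"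
      proof (cases "f \<in> D")
        case True thus ?thesis by (auto intro: deriv.base)
      next
        case False
        hence fU: "f \<in> U" using base by blast
        have wf: "wf_fact sig f" and ed: "edb Q" using fU upd f
          unfolding update_def dataset_def by auto
        have lo: "length os = fst (sig Q)" and sq: "snd (sig Q)" using wf f
          unfolding wf_fact_def by auto
        have tin: "\<tau>in < t" using fU upd f unfolding update_def by fastforce
        have objs: "set os \<subseteq> crit_domain \<Pi> D oI"
          using fU f updobjs unfolding data_objs_def by force
        have "a * (int R - int (rank \<Pi> Q)) \<le> a * int (card \<Pi>)"
          using a0 Rc by (intro mult_left_mono) auto
        hence "t \<le> tau0 \<Pi> \<tau>out + rad \<Pi>"
          using d Tle[OF tT] unfolding rad_def a_def by (simp add: algebra_simps)
        hence cr: "critical \<Pi> \<tau>in \<tau>out t" using tin unfolding critical_def by simp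
        have "f \<in> B" unfolding B_def bounded_update_def using f Q ed sq lo objs cr by blast
        thus ?thesis by (auto intro: deriv.base)
      qed
    qed
  next
    case (step r ov tv)
    show ?case
    proof (intro allI impI)
      fix Q os t \<tau>'
      assume f: "eval_atom ov tv (snd r) = (Q, os, Some t)" and Q: "Q \<in> preds \<Pi>" and tT: "\<tau>' \<in> TT"
        and d: "\<bar>t - \<tau>'\<bar> \<le> a * (int R - int (rank \<Pi> Q))"
      obtain Q0 ts so where hd0: "snd r = Atom Q0 ts so" by (cases "snd r")
      then obtain s where hd: "snd r = Atom Q ts (Some s)" and ts: "t = eval_t tv s"
        using f by (cases so) auto
      show "deriv \<Pi> (D \<union> B) (eval_atom ov tv (snd r))"
      proof (rule deriv.step[OF step.hyps(1)], intro ballI)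
        fix b assume b: "b \<in> set (fst r)"
        have bp: "b \<in> prog_atoms \<Pi>" using step.hyps(1) b unfolding prog_atoms_def rule_atoms_def by auto
        then obtain sb where sb: "atargs b = Some sb" using norigid unfolding no_rigid_atoms_def by blast
        obtain Qb tsb where bb: "b = Atom Qb tsb (Some sb)" using sb by (cases b) auto
        have Qbp: "Qb \<in> preds \<Pi>" using bp bb unfolding preds_def by force
        have dep: "depends \<Pi> Q Qb" unfolding depends_def using step.hyps(1) hd b bb by force
        have rk: "rank \<Pi> Qb + 1 \<le> rank \<Pi> Q" using rank_dep[OF fin nonrec dep] .
        have IH: "\<forall>Q os t \<tau>'. eval_atom ov tv b = (Q, os, Some t) \<longrightarrow> Q \<in> preds \<Pi> \<longrightarrow> \<tau>' \<in> TT \<longrightarrow>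
           \<bar>t - \<tau>'\<bar> \<le> a * (int R - int (rank \<Pi> Q)) \<longrightarrow> deriv \<Pi> (D \<union> B) (eval_atom ov tv b)"
          using step.IH b by blast
        have ev: "eval_atom ov tv b = (Qb, map (eval_o ov) tsb, Some (eval_t tv sb))" using bb by simp
        have nn: "0 \<le> a * (int R - int (rank \<Pi> Qb))" using a0 rkR[OF Qbp] by simp
        from time_step[OF step.hyps(1) fin conn hd b sb, of tv]
        show "deriv \<Pi> (D \<union> B) (eval_atom ov tv b)"
        proof
          assume "\<exists>k. sb = TConst k \<and> k \<in> prog_tpoints \<Pi>"
          then obtain k where k: "sb = TConst k" "k \<in> prog_tpoints \<Pi>" by blast
          have "k \<in> TT" using k TT_def by simp
          thus ?thesis using IH ev Qbp nn k by auto
        next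
          assume tb: "\<bar>eval_t tv sb - eval_t tv s\<bar> \<le> max_radius \<Pi>"
          have "int R - int (rank \<Pi> Q) + 1 \<le> int R - int (rank \<Pi> Qb)" using rk by simp
          hence "a * (int R - int (rank \<Pi> Q) + 1) \<le> a * (int R - int (rank \<Pi> Qb))"
            using a0 by (rule mult_left_mono)
          hence "\<bar>eval_t tv sb - \<tau>'\<bar> \<le> a * (int R - int (rank \<Pi> Qb))"
            using tb d ts unfolding a_def by (simp add: algebra_simps)
          thus ?thesis using IH ev Qbp tT by auto
        qed
      qed
    qed
  qed
  have "deriv \<Pi> (D \<union> U) (P, os, Some \<tau>)" using entails_deriv[OF ent] .
  hence "deriv \<Pi> (D \<union> B) (P, os, Some \<tau>)" using main Ppred T dist
    unfolding TT_def a_def R_def by blast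
  thus ?thesis unfolding B_def by (rule deriv_entails)
qed

end
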